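(* Let $d\ge1$. There exist $C>0$ and $N\in\mathbb{N}$ such that $\mathrm{ex}(n,\mathcal{F}_d)\ge C\,n^{\,d+1-\frac{2(d+1)}{3^{d+1}-1}}$ for all $n\ge N$.
   Context: A $k$-graph is a hypergraph whose edges are all $k$-element subsets of a finite vertex set. A $k$-graph is $\mathcal{F}$-free if it has no subhypergraph isomorphic to a member of $\mathcal{F}$; $\mathrm{ex}(n,\mathcal{F})$ is the maximum number of edges of an $\mathcal{F}$-free $k$-graph on $n$ vertices. A simplicial complex is a nonempty family of subsets of a finite vertex set closed under subsets; $\dim F=|F|-1$. A complex $K$ with vertex set identified with a subset of $[n]$ is nice on $[n]$ if for every $F\subseteq[n]$ exactly one of $F$, $[n]\setminus F$ lies in $K$. The join $K_1*K_2$ has vertex set $V(K_1)\sqcup V(K_2)$ and simplices $F_1\sqcup F_2$ with $F_i\in K_i$. For a $d$-dimensional complex $K$, $(K)^d$ is the $(d+1)$-graph on $V(K)$ whose edges are the $d$-simplices of $K$. $\mathcal{F}_d$ is the family of $(d+1)$-graphs $(K_1*\cdots*K_s)^d$ where $s\ge1$, each $K_i$ is nice on $[n_i]$, $\dim(K_1*\cdots*K_s)=d$, and $n_1+\cdots+n_s=2d+s+2$. *)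

theory Defs
  imports Complex_Main
begin

definition is_kgraph :: "nat \<Rightarrow> 'a set \<times> 'a set set \<Rightarrow> bool" where
  "is_kgraph k G \<longleftrightarrow> finite (fst G) \<and> (\<forall>e\<in>snd G. e \<subseteq> fst G \<and> card e = k)"

definition contains_copy :: "'a set \<times> 'a set set \<Rightarrow> 'b set \<times> 'b set set \<Rightarrow> bool" where
  "contains_copy G H \<longleftrightarrow>
     (\<exists>f. inj_on f (fst H) \<and> f ` fst H \<subseteq> fst G \<and> (\<forall>e\<in>snd H. f ` e \<in> snd G))"

definition family_free :: "'a set \<times> 'a set set \<Rightarrow> ('b set \<times> 'b set set) set \<Rightarrow> bool" where
  "family_free G \<F> \<longleftrightarrow> (\<forall>H\<in>\<F>. \<not> contains_copy G H)"

definition ex_num :: "nat \<Rightarrow> nat \<Rightarrow> ('b set \<times> 'b set set) set \<Rightarrow> nat" where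
  "ex_num k n \<F> = Max {card E | E. is_kgraph k ({0..<n}, E) \<and> family_free ({0..<n}, E) \<F>}"

definition simplicial_complex :: "'a set \<Rightarrow> 'a set set \<Rightarrow> bool" where
  "simplicial_complex V K \<longleftrightarrow> K \<noteq> {} \<and> K \<subseteq> Pow V \<and> (\<forall>F\<in>K. \<forall>G. G \<subseteq> F \<longrightarrow> G \<in> K)"

definition nice :: "nat \<Rightarrow> nat set set \<Rightarrow> bool" where
  "nice n K \<longleftrightarrow> simplicial_complex {0..<n} K \<and>
     (\<forall>F. F \<subseteq> {0..<n} \<longrightarrow> ((F \<in> K) \<noteq> ({0..<n} - F \<in> K)))"

text \<open>Join K_0 * ... * K_(s-1), where K_i has vertex set {0..<ns i};
  the disjoint union of vertex sets is realised as pairs (i, j).\<close>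

definition join_verts :: "nat \<Rightarrow> (nat \<Rightarrow> nat) \<Rightarrow> (nat \<times> nat) set" where
  "join_verts s ns = {(i, j). i < s \<and> j < ns i}"

definition join_cx :: "nat \<Rightarrow> (nat \<Rightarrow> nat) \<Rightarrow> (nat \<Rightarrow> nat set set) \<Rightarrow> (nat \<times> nat) set set" where
  "join_cx s ns Ks = {F. F \<subseteq> join_verts s ns \<and> (\<forall>i<s. {j. (i, j) \<in> F} \<in> Ks i)}"

definition cx_dim :: "'a set set \<Rightarrow> nat" where
  "cx_dim K = Max (card ` K) - 1"

definition skel :: "nat \<Rightarrow> 'a set \<Rightarrow> 'a set set \<Rightarrow> 'a set \<times> 'a set set" where
  "skel d V K = (V, {F \<in> K. card F = d + 1})"

definition F_fam :: "nat \<Rightarrow> ((nat \<times> nat) set \<times> (nat \<times> nat) set set) set" where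
  "F_fam d = {skel d (join_verts s ns) (join_cx s ns Ks) | s ns Ks.
      s \<ge> 1 \<and> (\<forall>i<s. nice (ns i) (Ks i)) \<and>
      cx_dim (join_cx s ns Ks) = d \<and> (\<Sum>i<s. ns i) = 2 * d + s + 2}"

end

theory Submission
  imports Defs "HOL-Library.FuncSet"
begin


definition Pset :: "nat \<Rightarrow> nat \<Rightarrow> nat set set" where
  "Pset k m = {e. e \<subseteq> {0..<k*m} \<and> (\<forall>j<k. card {x\<in>e. x div m = j} = 1)}"

definition Tedges :: "nat \<Rightarrow> nat \<Rightarrow> (nat \<Rightarrow> nat set) \<Rightarrow> nat set set" where
  "Tedges k m T = {e \<in> Pset k m. e \<subseteq> (\<Union>j<k. T j)}"

definition Cfg :: "nat \<Rightarrow> nat \<Rightarrow> (nat \<Rightarrow> nat set) set" where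
  "Cfg k m = PiE {..<k} (\<lambda>j. {S. S \<subseteq> {j*m..<j*m+m} \<and> card S = 3})"

definition cfg_free :: "nat \<Rightarrow> nat \<Rightarrow> nat set set \<Rightarrow> bool" where
  "cfg_free k m E \<longleftrightarrow> (\<forall>T\<in>Cfg k m. \<not> Tedges k m T \<subseteq> E)"

lemma Pset_finite: "finite (Pset k m)"
proof -
  have "Pset k m \<subseteq> Pow {0..<k*m}" by (auto simp: Pset_def)
  then show ?thesis by (rule finite_subset) simp
qed

lemma block_div: "x \<in> {j*m..<j*m+(m::nat)} \<Longrightarrow> x div m = j"
proof -
  assume x: "x \<in> {j*m..<j*m+(m::nat)}"
  then have m: "0 < m" by auto
  have "x = m * j + (x - j*m)" using x by simp
  moreover have "x - j*m < m" using x by auto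
  ultimately have "x div m = (m*j + (x - j*m)) div m" by simp
  also have "\<dots> = j" using m \<open>x - j*m < m\<close> by simp
  finally show ?thesis .
qed

lemma transversal_inj:
  fixes B :: "nat \<Rightarrow> nat set"
  assumes "\<And>j. j < k \<Longrightarrow> B j \<subseteq> {j*m..<j*m+m}"
  shows "inj_on (\<lambda>g. g ` {..<k}) (PiE {..<k} B)"
proof (rule inj_onI)
  fix g g' assume g: "g \<in> PiE {..<k} B" and g': "g' \<in> PiE {..<k} B"
    and eq: "g ` {..<k} = g' ` {..<k}"
  show "g = g'"
  proof (rule PiE_ext[OF g g'])
    fix j assume j: "j \<in> {..<k}"
    then have "g j \<in> g' ` {..<k}" using eq by blast
    then obtain j' where j': "j' < k" "g j = g' j'" by auto
    have "g j div m = j" using g j assms by (auto intro!: block_div simp: PiE_iff)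
    moreover have "g' j' div m = j'" using g' j' assms by (auto intro!: block_div simp: PiE_iff)
    ultimately show "g j = g' j" using j' by simp
  qed
qed

lemma transversal_in:
  fixes B :: "nat \<Rightarrow> nat set"
  assumes "\<And>j. j < k \<Longrightarrow> B j \<subseteq> {j*m..<j*m+m}" and g: "g \<in> PiE {..<k} B"
  shows "g ` {..<k} \<in> Pset k m" "g ` {..<k} \<subseteq> (\<Union>j<k. B j)"
proof -
  have gj: "g j \<in> {j*m..<j*m+m}" if "j < k" for j
  proof -
    have "g j \<in> B j" using g that by (auto simp: PiE_iff)
    then show ?thesis using assms(1)[OF that] by blast
  qed
  have dv: "\<And>j. j < k \<Longrightarrow> g j div m = j" using gj block_div by blast
  have "g j < k * m" if "j < k" for j
  proof -
    have "g j < j*m + m" using gj[OF that] by simp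
    also have "\<dots> = (j+1)*m" by simp
    also have "\<dots> \<le> k*m" using that by (intro mult_right_mono) auto
    finally show ?thesis .
  qed
  then have s1: "g ` {..<k} \<subseteq> {0..<k*m}" by auto
  have "{x \<in> g ` {..<k}. x div m = j} = {g j}" if "j < k" for j
  proof
    show "{x \<in> g ` {..<k}. x div m = j} \<subseteq> {g j}"
    proof
      fix x assume "x \<in> {x \<in> g ` {..<k}. x div m = j}"
      then obtain j' where "j' < k" "x = g j'" "x div m = j" by auto
      then show "x \<in> {g j}" using dv by auto
    qed
  qed (use dv that in auto)
  then show "g ` {..<k} \<in> Pset k m" using s1 by (simp add: Pset_def)
  show "g ` {..<k} \<subseteq> (\<Union>j<k. B j)" using g by (auto simp: PiE_iff)
qed

lemma card_Pset: "m ^ k \<le> card (Pset k m)"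
proof -
  let ?B = "\<lambda>j. {j*m..<j*m+m}"
  have B: "\<And>j. j < k \<Longrightarrow> ?B j \<subseteq> {j*m..<j*m+m}" by simp
  have "m ^ k = card (PiE {..<k} ?B)" by (simp add: card_PiE)
  also have "\<dots> = card ((\<lambda>g. g ` {..<k}) ` PiE {..<k} ?B)"
    using card_image[OF transversal_inj[of k ?B m]] B by simp
  also have "\<dots> \<le> card (Pset k m)"
  proof (rule card_mono[OF Pset_finite])
    show "(\<lambda>g. g ` {..<k}) ` PiE {..<k} ?B \<subseteq> Pset k m"
    proof
      fix e assume "e \<in> (\<lambda>g. g ` {..<k}) ` PiE {..<k} ?B"
      then obtain g where g: "g \<in> PiE {..<k} ?B" "e = g ` {..<k}" by blast
      show "e \<in> Pset k m" using transversal_in(1)[OF B g(1)] g(2) by blast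
    qed
  qed
  finally show ?thesis .
qed

lemma card_Tedges:
  assumes T: "T \<in> Cfg k m"
  shows "3 ^ k \<le> card (Tedges k m T)"
proof -
  have B: "\<And>j. j < k \<Longrightarrow> T j \<subseteq> {j*m..<j*m+m}" and c3: "\<And>j. j < k \<Longrightarrow> card (T j) = 3"
    using T by (auto simp: Cfg_def PiE_iff)
  have "3 ^ k = card (PiE {..<k} T)" using c3 by (simp add: card_PiE)
  also have "\<dots> = card ((\<lambda>g. g ` {..<k}) ` PiE {..<k} T)"
    using card_image[OF transversal_inj[of k T m]] B by simp
  also have "\<dots> \<le> card (Tedges k m T)"
  proof (rule card_mono)
    show "finite (Tedges k m T)"
      by (rule finite_subset[OF _ Pset_finite]) (unfold Tedges_def, blast)
    show "(\<lambda>g. g ` {..<k}) ` PiE {..<k} T \<subseteq> Tedges k m T"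
    proof
      fix e assume "e \<in> (\<lambda>g. g ` {..<k}) ` PiE {..<k} T"
      then obtain g where g: "g \<in> PiE {..<k} T" "e = g ` {..<k}" by blast
      show "e \<in> Tedges k m T" unfolding Tedges_def using transversal_in[OF B g(1)] g(2) by blast
    qed
  qed
  finally show ?thesis .
qed

lemma Tedges_finite: "finite (Tedges k m T)"
proof (rule finite_subset[OF _ Pset_finite])
  show "Tedges k m T \<subseteq> Pset k m" unfolding Tedges_def by blast
qed

lemma card_Cfg: "card (Cfg k m) \<le> m ^ (3*k)"
proof -
  have "card (Cfg k m) = (\<Prod>j<k. card {S. S \<subseteq> {j*m..<j*m+m} \<and> card S = 3})"
    by (simp add: Cfg_def card_PiE)
  also have "\<dots> = (\<Prod>j<k. m choose 3)"
  proof (rule prod.cong[OF refl])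
    fix j
    have "card {S. S \<subseteq> {j*m..<j*m+m} \<and> card S = 3} = card {j*m..<j*m+m} choose 3"
      by (rule n_subsets) simp
    then show "card {S. S \<subseteq> {j*m..<j*m+m} \<and> card S = 3} = m choose 3" by simp
  qed
  also have "\<dots> = (m choose 3) ^ k" by (simp only: prod_constant card_lessThan)
  also have "\<dots> \<le> (m ^ 3) ^ k"
  proof (cases "3 \<le> m")
    case True then show ?thesis by (intro power_mono binomial_le_pow) auto
  next
    case False then have z: "m choose 3 = 0" by (simp add: binomial_eq_0)
    show ?thesis unfolding z by (cases k) simp_all
  qed
  also have "\<dots> = m ^ (3*k)" by (simp only: power_mult)
  finally show ?thesis .
qed

lemma Cfg_finite: "finite (Cfg k m)"
  unfolding Cfg_def
proof (rule finite_PiE)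
  show "finite {..<k}" by simp
  fix j show "finite {S. S \<subseteq> {j*m..<j*m+m} \<and> card S = 3}"
    by (rule finite_subset[of _ "Pow {j*m..<j*m+m}"]) auto
qed



lemma binom_ratio:
  "b \<le> M \<Longrightarrow> M \<le> N \<Longrightarrow>
   real ((N - b) choose (M - b)) \<le> (real M / real N) ^ b * real (N choose M)"
proof (induction b arbitrary: M N)
  case 0 then show ?case by simp
next
  case (Suc b)
  obtain M' where M: "M = Suc M'" using Suc.prems by (cases M) auto
  obtain N' where N: "N = Suc N'" using Suc.prems by (cases N) auto
  have bM: "b \<le> M'" "M' \<le> N'" using Suc.prems M N by auto
  have IH: "real ((N' - b) choose (M' - b)) \<le> (real M' / real N') ^ b * real (N' choose M')"
    using Suc.IH[OF bM] .
  have eq: "real (N' choose M') = real (N choose M) * real M / real N"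
  proof -
    have "Suc N' * (N' choose M') = (Suc N' choose Suc M') * Suc M'" by (rule Suc_times_binomial_eq)
    then have "real (Suc N') * real (N' choose M') = real (Suc N' choose Suc M') * real (Suc M')"
      by (metis of_nat_mult)
    then show ?thesis unfolding M N by (simp add: field_simps)
  qed
  have pm: "(real M' / real N') ^ b \<le> (real M / real N) ^ b"
  proof (cases "N' = 0")
    case True then have "b = 0" using bM by simp
    then show ?thesis by simp
  next
    case False
    have "real M' / real N' \<le> real M / real N"
      using False bM(2) unfolding M N by (simp add: field_simps)
    then show ?thesis by (intro power_mono) auto
  qed
  have "real ((N - Suc b) choose (M - Suc b)) = real ((N' - b) choose (M' - b))"
    unfolding M N by simp
  also have "\<dots> \<le> (real M' / real N') ^ b * real (N' choose M')" by (rule IH)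
  also have "\<dots> \<le> (real M / real N) ^ b * real (N' choose M')"
    by (intro mult_right_mono pm) auto
  also have "\<dots> = (real M / real N) ^ Suc b * real (N choose M)"
    unfolding eq by (simp add: field_simps)
  finally show ?case .
qed

lemma count_sup:
  assumes "finite P" "B \<subseteq> P" "card B \<le> M"
  shows "card {E. E \<subseteq> P \<and> card E = M \<and> B \<subseteq> E} = (card P - card B) choose (M - card B)"
proof -
  have fB: "finite B" using assms finite_subset by blast
  have eq: "{E. E \<subseteq> P \<and> card E = M \<and> B \<subseteq> E} =
      (\<lambda>E'. E' \<union> B) ` {E'. E' \<subseteq> P - B \<and> card E' = M - card B}"
  proof
    show "{E. E \<subseteq> P \<and> card E = M \<and> B \<subseteq> E} \<subseteq> (\<lambda>E'. E' \<union> B) ` {E'. E' \<subseteq> P - B \<and> card E' = M - card B}"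
    proof
      fix E assume E: "E \<in> {E. E \<subseteq> P \<and> card E = M \<and> B \<subseteq> E}"
      then have fE: "finite E" using assms finite_subset by blast
      have "card (E - B) = M - card B" using E fB by (simp add: card_Diff_subset)
      moreover have "E = (E - B) \<union> B" using E by blast
      ultimately show "E \<in> (\<lambda>E'. E' \<union> B) ` {E'. E' \<subseteq> P - B \<and> card E' = M - card B}"
        using E by blast
    qed
  next
    show "(\<lambda>E'. E' \<union> B) ` {E'. E' \<subseteq> P - B \<and> card E' = M - card B} \<subseteq> {E. E \<subseteq> P \<and> card E = M \<and> B \<subseteq> E}"
    proof
      fix E assume "E \<in> (\<lambda>E'. E' \<union> B) ` {E'. E' \<subseteq> P - B \<and> card E' = M - card B}"
      then obtain E' where E': "E' \<subseteq> P - B" "card E' = M - card B" "E = E' \<union> B" by auto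
      have "finite E'" using E'(1) assms(1) finite_subset by blast
      have "E' \<inter> B = {}" using E'(1) by blast
      then have "card E = card E' + card B" using E' fB \<open>finite E'\<close> by (simp add: card_Un_disjoint)
      then show "E \<in> {E. E \<subseteq> P \<and> card E = M \<and> B \<subseteq> E}" using E' assms by auto
    qed
  qed
  have inj: "inj_on (\<lambda>E'. E' \<union> B) {E'. E' \<subseteq> P - B \<and> card E' = M - card B}"
    by (rule inj_onI) blast
  have "card {E. E \<subseteq> P \<and> card E = M \<and> B \<subseteq> E} = card {E'. E' \<subseteq> P - B \<and> card E' = M - card B}"
    unfolding eq by (rule card_image[OF inj])
  also have "\<dots> = card (P - B) choose (M - card B)" using assms by (simp add: n_subsets)
  also have "card (P - B) = card P - card B" using assms fB by (simp add: card_Diff_subset)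
  finally show ?thesis .
qed

lemma count_bound:
  assumes "finite P" "B \<subseteq> P" "r \<le> card B" "M \<le> card P"
  shows "real (card {E. E \<subseteq> P \<and> card E = M \<and> B \<subseteq> E}) \<le> (real M / real (card P)) ^ r * real (card P choose M)"
proof (cases "card B \<le> M")
  case False
  have "{E. E \<subseteq> P \<and> card E = M \<and> B \<subseteq> E} = {}"
  proof (rule ccontr)
    assume "{E. E \<subseteq> P \<and> card E = M \<and> B \<subseteq> E} \<noteq> {}"
    then obtain E where "E \<subseteq> P" "card E = M" "B \<subseteq> E" by auto
    then have "card B \<le> M" using assms(1) by (metis card_mono finite_subset)
    then show False using False by simp
  qed
  then show ?thesis by (simp only: card.empty of_nat_0) simp
next
  case True
  have q: "0 \<le> real M / real (card P)" "real M / real (card P) \<le> 1"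
    using assms(4) by (auto simp: divide_le_eq_1)
  have "real (card {E. E \<subseteq> P \<and> card E = M \<and> B \<subseteq> E}) = real ((card P - card B) choose (M - card B))"
    using count_sup[OF assms(1,2) True] by simp
  also have "\<dots> \<le> (real M / real (card P)) ^ card B * real (card P choose M)"
    by (rule binom_ratio[OF True assms(4)])
  also have "\<dots> \<le> (real M / real (card P)) ^ r * real (card P choose M)"
    by (intro mult_right_mono power_decreasing assms q) auto
  finally show ?thesis .
qed

lemma pick_avg:
  fixes f :: "'a \<Rightarrow> real"
  assumes "finite S" "S \<noteq> {}" "real (card S) * a \<le> sum f S"
  shows "\<exists>x\<in>S. a \<le> f x"
proof (rule ccontr)
  assume "\<not> ?thesis"
  then have "\<forall>x\<in>S. f x < a" by auto
  then have "sum f S < sum (\<lambda>_. a) S" using assms by (intro sum_strict_mono) auto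
  then show False using assms by simp
qed

definition bad :: "nat \<Rightarrow> nat \<Rightarrow> nat set set \<Rightarrow> nat" where
  "bad k m E = card {T \<in> Cfg k m. Tedges k m T \<subseteq> E}"

lemma exists_E:
  assumes "M \<le> card (Pset k m)"
  shows "\<exists>E. E \<subseteq> Pset k m \<and> card E = M \<and>
    real M - real (card (Cfg k m)) * (real M / real (card (Pset k m))) ^ (3^k) \<le> real (card E) - real (bad k m E)"
proof -
  define P where "P = Pset k m"
  define N where "N = card P"
  define q where "q = (real M / real N) ^ (3^k)"
  define S where "S = {E. E \<subseteq> P \<and> card E = M}"
  have fP: "finite P" unfolding P_def by (rule Pset_finite)
  have fS: "finite S" by (rule finite_subset[of _ "Pow P"]) (auto simp: S_def fP)
  have cS: "card S = N choose M" unfolding S_def N_def using fP by (simp add: n_subsets)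
  have MN: "M \<le> N" using assms unfolding N_def P_def .
  have Sne: "S \<noteq> {}" using cS zero_less_binomial[OF MN] by auto
  have fC: "finite (Cfg k m)" by (rule Cfg_finite)
  have s1: "(\<Sum>E\<in>S. real (card E)) = real (card S) * real M" unfolding S_def by simp
  have "(\<Sum>E\<in>S. real (bad k m E)) = (\<Sum>E\<in>S. \<Sum>T\<in>Cfg k m. of_bool (Tedges k m T \<subseteq> E))"
    using fC by (simp add: bad_def Int_def)
  also have "\<dots> = (\<Sum>T\<in>Cfg k m. \<Sum>E\<in>S. of_bool (Tedges k m T \<subseteq> E))" by (rule sum.swap)
  also have "\<dots> = (\<Sum>T\<in>Cfg k m. real (card {E. E \<subseteq> P \<and> card E = M \<and> Tedges k m T \<subseteq> E}))"
    using fS by (intro sum.cong refl) (simp add: S_def Int_def conj_assoc)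
  also have "\<dots> \<le> (\<Sum>T\<in>Cfg k m. q * real (N choose M))"
  proof (intro sum_mono)
    fix T assume T: "T \<in> Cfg k m"
    show "real (card {E. E \<subseteq> P \<and> card E = M \<and> Tedges k m T \<subseteq> E}) \<le> q * real (N choose M)"
      unfolding q_def N_def
      by (rule count_bound[OF fP _ card_Tedges[OF T] MN[unfolded N_def]])
         (auto simp: Tedges_def P_def)
  qed
  also have "\<dots> = real (card S) * (real (card (Cfg k m)) * q)" using cS by simp
  finally have s2: "(\<Sum>E\<in>S. real (bad k m E)) \<le> real (card S) * (real (card (Cfg k m)) * q)" .
  have "real (card S) * (real M - real (card (Cfg k m)) * q) \<le> (\<Sum>E\<in>S. real (card E) - real (bad k m E))"
    using s1 s2 by (simp add: sum_subtractf right_diff_distrib)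
  then obtain E where "E \<in> S" "real M - real (card (Cfg k m)) * q \<le> real (card E) - real (bad k m E)"
    using pick_avg[OF fS Sne] by blast
  then show ?thesis unfolding S_def q_def N_def P_def by blast
qed

lemma deletion:
  assumes "E \<subseteq> Pset k m"
  shows "\<exists>E'. E' \<subseteq> E \<and> cfg_free k m E' \<and> card E - bad k m E \<le> card E'"
proof -
  define Bd where "Bd = {T \<in> Cfg k m. Tedges k m T \<subseteq> E}"
  define pk where "pk T = (SOME e. e \<in> Tedges k m T)" for T
  have ne: "Tedges k m T \<noteq> {}" if "T \<in> Cfg k m" for T
  proof -
    have "3 ^ k \<le> card (Tedges k m T)" by (rule card_Tedges[OF that])
    then have "card (Tedges k m T) \<noteq> 0" by (metis not_one_le_zero one_le_power le_trans one_le_numeral le_zero_eq)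
    then show ?thesis by auto
  qed
  have pk: "pk T \<in> Tedges k m T" if "T \<in> Cfg k m" for T
    unfolding pk_def using ne[OF that] by (simp add: some_in_eq)
  define E' where "E' = E - pk ` Bd"
  have fB: "finite Bd" unfolding Bd_def using Cfg_finite by simp
  have "card E - card (pk ` Bd) \<le> card E'" unfolding E'_def
    using fB by (intro diff_card_le_card_Diff) simp
  moreover have "card (pk ` Bd) \<le> card Bd" using fB by (rule card_image_le)
  ultimately have c: "card E - bad k m E \<le> card E'" unfolding bad_def Bd_def[symmetric] by linarith
  have "cfg_free k m E'" unfolding cfg_free_def
  proof (intro ballI notI)
    fix T assume T: "T \<in> Cfg k m" and sub: "Tedges k m T \<subseteq> E'"
    then have "T \<in> Bd" unfolding Bd_def E'_def by auto
    then have "pk T \<notin> E'" unfolding E'_def by auto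
    moreover have "pk T \<in> E'" using sub pk[OF T] by auto
    ultimately show False by contradiction
  qed
  then show ?thesis using c unfolding E'_def by blast
qed

lemma good_E:
  assumes "M \<le> card (Pset k m)"
  shows "\<exists>E. E \<subseteq> Pset k m \<and> cfg_free k m E \<and>
    real M - real m ^ (3*k) * (real M / real (card (Pset k m))) ^ (3^k) \<le> real (card E)"
proof -
  obtain E where E: "E \<subseteq> Pset k m" "card E = M"
    "real M - real (card (Cfg k m)) * (real M / real (card (Pset k m))) ^ (3^k) \<le> real (card E) - real (bad k m E)"
    using exists_E[OF assms] by blast
  obtain E' where E': "E' \<subseteq> E" "cfg_free k m E'" "card E - bad k m E \<le> card E'"
    using deletion[OF E(1)] by blast
  have "real (card (Cfg k m)) \<le> real m ^ (3*k)" using card_Cfg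
    by (metis of_nat_le_iff of_nat_power)
  then have "real m ^ (3*k) * (real M / real (card (Pset k m))) ^ (3^k) \<ge>
             real (card (Cfg k m)) * (real M / real (card (Pset k m))) ^ (3^k)"
    by (intro mult_right_mono) auto
  moreover have "real (card E) - real (bad k m E) \<le> real (card E')" using E'(3) by linarith
  ultimately show ?thesis using E E' by (intro exI[of _ E']) auto
qed



definition sl :: "nat \<Rightarrow> (nat \<times> nat) set \<Rightarrow> nat set" where
  "sl i F = {j. (i, j) \<in> F}"

lemma join_verts_iff: "(i, a) \<in> join_verts s ns \<longleftrightarrow> i < s \<and> a < ns i"
  by (simp add: join_verts_def)

lemma join_verts_eq: "join_verts s ns = Sigma {..<s} (\<lambda>i. {..<ns i})"
  by (auto simp: join_verts_def)

lemma finite_join_verts: "finite (join_verts s ns)"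
  by (simp add: join_verts_eq)

lemma join_cx_iff: "F \<in> join_cx s ns Ks \<longleftrightarrow> F \<subseteq> join_verts s ns \<and> (\<forall>i<s. sl i F \<in> Ks i)"
  by (simp add: join_cx_def sl_def)

lemma sl_sub: "F \<subseteq> join_verts s ns \<Longrightarrow> sl i F \<subseteq> {0..<ns i}"
  by (auto simp: sl_def join_verts_def)

lemma sl_finite: assumes "F \<subseteq> join_verts s ns" shows "finite (sl i F)"
proof (rule finite_subset)
  show "sl i F \<subseteq> {0..<ns i}" using assms by (rule sl_sub)
qed simp

lemma card_slices:
  assumes "F \<subseteq> join_verts s ns"
  shows "card F = (\<Sum>i<s. card (sl i F))"
proof -
  have eq: "F = (\<Union>i\<in>{..<s}. (\<lambda>j. (i, j)) ` sl i F)"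
    using assms by (auto simp: sl_def join_verts_def)
  have "card (\<Union>i\<in>{..<s}. (\<lambda>j. (i, j)) ` sl i F) = (\<Sum>i<s. card ((\<lambda>j. (i, j)) ` sl i F))"
    by (rule card_UN_disjoint) (auto simp: sl_finite[OF assms])
  also have "\<dots> = (\<Sum>i<s. card (sl i F))"
    by (intro sum.cong refl card_image) (auto simp: inj_on_def)
  finally show ?thesis using eq by simp
qed

lemma sl_build:
  "sl i (\<Union>i'\<in>{..<s}. Pair i' ` G i') = (if i < s then G i else {})"
  by (auto simp: sl_def)

lemma build_sub:
  assumes "\<And>i. i < s \<Longrightarrow> G i \<subseteq> {0..<ns i}"
  shows "(\<Union>i'\<in>{..<s}. Pair i' ` G i') \<subseteq> join_verts s ns"
proof
  fix x assume "x \<in> (\<Union>i'\<in>{..<s}. Pair i' ` G i')"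
  then obtain i a where x: "x = (i, a)" "i < s" "a \<in> G i" by auto
  then have "a < ns i" using assms[OF x(2)] by auto
  then show "x \<in> join_verts s ns" using x by (simp add: join_verts_iff)
qed

lemma sum_2p1: "(\<Sum>i<n. 2 * (f i::nat) + 1) = 2 * (\<Sum>i<n. f i) + n"
  by (induction n) auto

lemma ext_subset:
  assumes "finite B" "A \<subseteq> B" "card A \<le> n" "n \<le> card B"
  shows "\<exists>G. A \<subseteq> G \<and> G \<subseteq> B \<and> card G = n"
proof -
  have fA: "finite A" using assms finite_subset by blast
  have "n - card A \<le> card (B - A)" using assms fA by (simp add: card_Diff_subset)
  then obtain T where T: "T \<subseteq> B - A" "card T = n - card A" "finite T"
    by (rule obtain_subset_with_card_n)
  have "A \<inter> T = {}" using T by blast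
  then have "card (A \<union> T) = n" using T fA assms(3) by (simp add: card_Un_disjoint)
  then show ?thesis using T assms by (intro exI[of _ "A \<union> T"]) auto
qed

lemma Pset_lt: assumes "e \<in> Pset k m" "x \<in> e" shows "x div m < k"
proof -
  have "x < k * m" using assms by (auto simp: Pset_def)
  then show ?thesis by (rule less_mult_imp_div_less)
qed

lemma Pset_rainbow:
  assumes "e \<in> Pset k m" "x \<in> e" "y \<in> e" "x div m = y div m"
  shows "x = y"
proof -
  have "card {z \<in> e. z div m = x div m} = 1"
    using assms Pset_lt[OF assms(1,2)] by (auto simp: Pset_def)
  then obtain z where eq: "{z \<in> e. z div m = x div m} = {z}" by (rule card_1_singletonE)
  have "x \<in> {z \<in> e. z div m = x div m}" using assms by simp
  then have "x = z" using eq by simp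
  moreover have "y \<in> {z \<in> e. z div m = x div m}" using assms by simp
  then have "y = z" using eq by simp
  ultimately show ?thesis by simp
qed

lemma Pset_col:
  assumes "e \<in> Pset k m" "j < k"
  shows "\<exists>x\<in>e. x div m = j"
proof -
  have "card {z \<in> e. z div m = j} = 1" using assms by (auto simp: Pset_def)
  then have "{z \<in> e. z div m = j} \<noteq> {}" by (metis card.empty zero_neq_one)
  then show ?thesis by blast
qed

lemma Pset_card:
  assumes "e \<in> Pset k m"
  shows "card e = k"
proof -
  have sub: "e \<subseteq> {0..<k*m}" using assms by (simp add: Pset_def)
  have fe: "finite e" using sub by (rule finite_subset) simp
  have eq: "e = (\<Union>j\<in>{..<k}. {z \<in> e. z div m = j})"
    using Pset_lt[OF assms] by auto
  have "card (\<Union>j\<in>{..<k}. {z \<in> e. z div m = j}) = (\<Sum>j<k. card {z \<in> e. z div m = j})"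
    by (rule card_UN_disjoint) (auto simp: fe)
  also have "\<dots> = (\<Sum>j<k. 1)" using assms by (intro sum.cong refl) (simp add: Pset_def)
  finally show ?thesis using eq by simp
qed

lemma div_block:
  assumes "x div m = j" "0 < (m::nat)"
  shows "x \<in> {j*m..<j*m+m}"
proof -
  have e: "j * m + x mod m = x" using div_mult_mod_eq[of x m] assms(1) by simp
  have "x mod m < m" using assms(2) by simp
  then have "j*m \<le> x \<and> x < j*m+m" using e by linarith
  then show ?thesis by simp
qed

locale J =
  fixes s :: nat and ns :: "nat \<Rightarrow> nat" and Ks :: "nat \<Rightarrow> nat set set" and d :: nat
  assumes nc: "\<And>i. i < s \<Longrightarrow> nice (ns i) (Ks i)"
    and dim: "cx_dim (join_cx s ns Ks) = d"
    and nsum: "(\<Sum>i<s. ns i) = 2*d + s + 2"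
    and d1: "d \<ge> 1"
begin

definition kk where "kk i = Max (card ` Ks i)"

lemma nc': "i < s \<Longrightarrow> nice (ns i) (Ks i)" by (rule nc)

lemma Ks_sub: assumes "i < s" shows "Ks i \<subseteq> Pow {0..<ns i}"
proof -
  have "nice (ns i) (Ks i)" by (rule nc'[OF assms])
  then show ?thesis by (simp add: nice_def simplicial_complex_def)
qed

lemma Ks_ne: assumes "i < s" shows "Ks i \<noteq> {}"
proof -
  have "nice (ns i) (Ks i)" by (rule nc'[OF assms])
  then show ?thesis by (simp add: nice_def simplicial_complex_def)
qed

lemma Ks_fin: assumes "i < s" shows "finite (Ks i)"
proof (rule finite_subset)
  show "Ks i \<subseteq> Pow {0..<ns i}" using assms by (rule Ks_sub)
  show "finite (Pow {0..<ns i})" by simp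
qed

lemma Ks_nice: assumes "i < s" "F \<subseteq> {0..<ns i}" shows "(F \<in> Ks i) \<noteq> ({0..<ns i} - F \<in> Ks i)"
proof -
  have "nice (ns i) (Ks i)" by (rule nc'[OF assms(1)])
  then show ?thesis using assms(2) unfolding nice_def by blast
qed

lemma card_le_kk: assumes "i < s" "G \<in> Ks i" shows "card G \<le> kk i"
proof -
  have "finite (card ` Ks i)" using Ks_fin[OF assms(1)] by simp
  moreover have "card G \<in> card ` Ks i" using assms(2) by simp
  ultimately show ?thesis unfolding kk_def by (rule Max_ge)
qed

lemma kk_att: "i < s \<Longrightarrow> \<exists>G\<in>Ks i. card G = kk i"
proof -
  assume i: "i < s"
  have "kk i \<in> card ` Ks i" unfolding kk_def using Ks_fin[OF i] Ks_ne[OF i] by (intro Max_in) auto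
  then show ?thesis by auto
qed

lemma join_fin: "finite (join_cx s ns Ks)"
proof (rule finite_subset[of _ "Pow (join_verts s ns)"])
  show "join_cx s ns Ks \<subseteq> Pow (join_verts s ns)" by (auto simp: join_cx_def)
  show "finite (Pow (join_verts s ns))" by (simp add: finite_join_verts)
qed

lemma sum_kk: "(\<Sum>i<s. kk i) = d + 1"
proof -
  have "\<forall>i. \<exists>G. i < s \<longrightarrow> G \<in> Ks i \<and> card G = kk i" using kk_att by blast
  then obtain G where G: "\<And>i. i < s \<Longrightarrow> G i \<in> Ks i \<and> card (G i) = kk i"
    using choice[of "\<lambda>i G. i < s \<longrightarrow> G \<in> Ks i \<and> card G = kk i"] by blast
  define F0 where "F0 = (\<Union>i'\<in>{..<s}. Pair i' ` G i')"
  have Gs: "\<And>i. i < s \<Longrightarrow> G i \<subseteq> {0..<ns i}" using G Ks_sub by blast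
  have F0s: "F0 \<subseteq> join_verts s ns" unfolding F0_def by (rule build_sub[OF Gs])
  have slF0: "\<And>i. i < s \<Longrightarrow> sl i F0 = G i" unfolding F0_def by (simp add: sl_build)
  have F0in: "F0 \<in> join_cx s ns Ks" using F0s slF0 G by (simp add: join_cx_iff)
  have cF0: "card F0 = (\<Sum>i<s. kk i)" using card_slices[OF F0s] slF0 G by simp
  have ub: "card F \<le> (\<Sum>i<s. kk i)" if "F \<in> join_cx s ns Ks" for F
  proof -
    have Fs: "F \<subseteq> join_verts s ns" and sls: "\<And>i. i < s \<Longrightarrow> sl i F \<in> Ks i"
      using that by (auto simp: join_cx_iff)
    have "card F = (\<Sum>i<s. card (sl i F))" by (rule card_slices[OF Fs])
    also have "\<dots> \<le> (\<Sum>i<s. kk i)" by (intro sum_mono card_le_kk sls) auto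
    finally show ?thesis .
  qed
  have "Max (card ` join_cx s ns Ks) = (\<Sum>i<s. kk i)"
  proof (rule Max_eqI)
    show "finite (card ` join_cx s ns Ks)" using join_fin by simp
    fix y assume "y \<in> card ` join_cx s ns Ks"
    then show "y \<le> (\<Sum>i<s. kk i)" using ub by auto
  next
    show "(\<Sum>i<s. kk i) \<in> card ` join_cx s ns Ks" using F0in cF0[symmetric] by (rule rev_image_eqI)
  qed
  then have "(\<Sum>i<s. kk i) - 1 = d" using dim by (simp add: cx_dim_def)
  then show ?thesis using d1 by linarith
qed

lemma ns_le: "i < s \<Longrightarrow> ns i \<le> 2 * kk i + 1"
proof (rule ccontr)
  assume i: "i < s" and "\<not> ns i \<le> 2 * kk i + 1"
  then have big: "2 * kk i + 2 \<le> ns i" by simp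
  define F where "F = {0..<Suc (kk i)}"
  have Fs: "F \<subseteq> {0..<ns i}" using big by (auto simp: F_def)
  have "F \<notin> Ks i" using card_le_kk[OF i, of F] by (auto simp: F_def)
  moreover have "{0..<ns i} - F \<notin> Ks i"
  proof
    assume "{0..<ns i} - F \<in> Ks i"
    then have "card ({0..<ns i} - F) \<le> kk i" by (rule card_le_kk[OF i])
    moreover have "card ({0..<ns i} - F) = ns i - Suc (kk i)"
      using Fs by (simp add: card_Diff_subset F_def)
    ultimately show False using big by simp
  qed
  ultimately show False using Ks_nice[OF i Fs] by simp
qed

lemma ns_eq: "i < s \<Longrightarrow> ns i = 2 * kk i + 1"
proof (rule ccontr)
  assume i: "i < s" and ne: "ns i \<noteq> 2 * kk i + 1"
  have lt: "ns i < 2 * kk i + 1" using ns_le[OF i] ne by simp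
  have "(\<Sum>i<s. ns i) < (\<Sum>i<s. 2 * kk i + 1)"
  proof (rule sum_strict_mono_ex1)
    show "finite {..<s}" by simp
    show "\<forall>x\<in>{..<s}. ns x \<le> 2 * kk x + 1" using ns_le by blast
    show "\<exists>a\<in>{..<s}. ns a < 2 * kk a + 1" using i lt by blast
  qed
  also have "(\<Sum>i<s. 2 * kk i + 1) = 2 * (\<Sum>i<s. kk i) + s"
    by (rule sum_2p1)
  finally show False using sum_kk nsum by simp
qed

lemma small_in:
  assumes i: "i < s" and G: "G \<subseteq> {0..<ns i}" "card G \<le> kk i"
  shows "G \<in> Ks i"
proof -
  have fG: "finite G" by (rule finite_subset[OF G(1)]) simp
  have "card ({0..<ns i} - G) = ns i - card G" using card_Diff_subset[OF fG G(1)] by simp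
  then have "card ({0..<ns i} - G) > kk i" using ns_eq[OF i] G by simp
  then have "{0..<ns i} - G \<notin> Ks i" using card_le_kk[OF i] by fastforce
  then show ?thesis using Ks_nice[OF i G(1)] by simp
qed

definition Ed where "Ed = {F \<in> join_cx s ns Ks. card F = d + 1}"

lemma Ed_sub: "F \<in> Ed \<Longrightarrow> F \<subseteq> join_verts s ns"
  by (auto simp: Ed_def join_cx_iff)

lemma Ed_sl: "F \<in> Ed \<Longrightarrow> i < s \<Longrightarrow> card (sl i F) \<le> kk i"
  by (auto simp: Ed_def join_cx_iff intro: card_le_kk)

lemma edge_ext:
  assumes X: "X \<subseteq> join_verts s ns" and c: "\<And>i. i < s \<Longrightarrow> card (sl i X) \<le> kk i"
  shows "\<exists>F\<in>Ed. X \<subseteq> F"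
proof -
  have "\<forall>i. \<exists>G. i < s \<longrightarrow> sl i X \<subseteq> G \<and> G \<subseteq> {0..<ns i} \<and> card G = kk i"
  proof
    fix i show "\<exists>G. i < s \<longrightarrow> sl i X \<subseteq> G \<and> G \<subseteq> {0..<ns i} \<and> card G = kk i"
    proof (cases "i < s")
      case True
      have "\<exists>G. sl i X \<subseteq> G \<and> G \<subseteq> {0..<ns i} \<and> card G = kk i"
      proof (rule ext_subset)
        show "finite {0..<ns i}" by simp
        show "sl i X \<subseteq> {0..<ns i}" by (rule sl_sub[OF X])
        show "card (sl i X) \<le> kk i" by (rule c[OF True])
        show "kk i \<le> card {0..<ns i}" using ns_eq[OF True] by simp
      qed
      then show ?thesis by blast
    qed auto
  qed
  then obtain G where G: "\<And>i. i < s \<Longrightarrow> sl i X \<subseteq> G i \<and> G i \<subseteq> {0..<ns i} \<and> card (G i) = kk i"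
    using choice[of "\<lambda>i G. i < s \<longrightarrow> sl i X \<subseteq> G \<and> G \<subseteq> {0..<ns i} \<and> card G = kk i"] by blast
  define F where "F = (\<Union>i'\<in>{..<s}. Pair i' ` G i')"
  have Fs: "F \<subseteq> join_verts s ns" unfolding F_def by (rule build_sub) (use G in blast)
  have slF: "\<And>i. i < s \<Longrightarrow> sl i F = G i" unfolding F_def by (simp add: sl_build)
  have "F \<in> join_cx s ns Ks" using Fs slF G small_in by (simp add: join_cx_iff)
  moreover have "card F = d + 1" using card_slices[OF Fs] slF G sum_kk by simp
  moreover have "X \<subseteq> F"
  proof
    fix x assume x: "x \<in> X"
    obtain i a where xa: "x = (i, a)" by (cases x)
    have "i < s" using X x xa by (auto simp: join_verts_def)
    moreover have "a \<in> sl i X" using x xa by (simp add: sl_def)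
    ultimately have "a \<in> G i" "i < s" using G by blast+
    then show "x \<in> F" unfolding F_def xa by blast
  qed
  ultimately show ?thesis by (auto simp: Ed_def)
qed

lemma pe_diff:
  assumes "i < s" "i' < s" "i \<noteq> i'" "a < ns i" "b < ns i'" "1 \<le> kk i" "1 \<le> kk i'"
  shows "\<exists>F\<in>Ed. (i, a) \<in> F \<and> (i', b) \<in> F"
proof -
  have "\<exists>F\<in>Ed. {(i, a), (i', b)} \<subseteq> F"
  proof (rule edge_ext)
    show "{(i, a), (i', b)} \<subseteq> join_verts s ns" using assms by (simp add: join_verts_iff)
    fix x assume "x < s"
    have "sl x {(i, a), (i', b)} = (if x = i then {a} else if x = i' then {b} else {})"
      using assms(3) by (auto simp: sl_def)
    then show "card (sl x {(i, a), (i', b)}) \<le> kk x" using assms by auto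
  qed
  then show ?thesis by auto
qed

lemma pe_same:
  assumes "i < s" "a < ns i" "b < ns i" "2 \<le> kk i"
  shows "\<exists>F\<in>Ed. (i, a) \<in> F \<and> (i, b) \<in> F"
proof -
  have "\<exists>F\<in>Ed. {(i, a), (i, b)} \<subseteq> F"
  proof (rule edge_ext)
    show "{(i, a), (i, b)} \<subseteq> join_verts s ns" using assms by (simp add: join_verts_iff)
    fix x assume "x < s"
    have "sl x {(i, a), (i, b)} = (if x = i then {a, b} else {})"
      by (auto simp: sl_def)
    moreover have "card {a, b} \<le> 2" by (simp add: card_insert_if)
    ultimately show "card (sl x {(i, a), (i, b)}) \<le> kk x" using assms by auto
  qed
  then show ?thesis by auto
qed

lemma pe_single:
  assumes "i < s" "a < ns i" "1 \<le> kk i"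
  shows "\<exists>F\<in>Ed. (i, a) \<in> F"
proof -
  have "\<exists>F\<in>Ed. {(i, a)} \<subseteq> F"
  proof (rule edge_ext)
    show "{(i, a)} \<subseteq> join_verts s ns" using assms by (simp add: join_verts_iff)
    fix x assume "x < s"
    have "sl x {(i, a)} = (if x = i then {a} else {})"
      by (auto simp: sl_def)
    then show "card (sl x {(i, a)}) \<le> kk x" using assms by auto
  qed
  then show ?thesis by auto
qed

lemma pe_any: "\<exists>F. F \<in> Ed"
proof -
  have "\<exists>F\<in>Ed. {} \<subseteq> F" by (rule edge_ext) (auto simp: sl_def)
  then show ?thesis by auto
qed

end



context J begin

lemma no_copy:
  assumes m: "0 < m" and E: "E \<subseteq> Pset (d+1) m" and cf: "cfg_free (d+1) m E"
    and inj: "inj_on f (join_verts s ns)" and fe: "\<And>F. F \<in> Ed \<Longrightarrow> f ` F \<in> E"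
  shows False
proof -
  define k where "k = d + 1"
  define chi where "chi v = f v div m" for v
  have feP: "f ` F \<in> Pset k m" if "F \<in> Ed" for F using fe[OF that] E k_def by auto
  have chi_lt: "chi v < k" if "F \<in> Ed" "v \<in> F" for F v
    unfolding chi_def using Pset_lt[OF feP[OF that(1)]] that(2) by blast
  have diff: "chi u \<noteq> chi v" if "F \<in> Ed" "u \<in> F" "v \<in> F" "u \<noteq> v" for F u v
  proof
    assume "chi u = chi v"
    then have "f u = f v" unfolding chi_def
      using Pset_rainbow[OF feP[OF that(1)]] that(2,3) by blast
    moreover have "u \<in> join_verts s ns" "v \<in> join_verts s ns" using Ed_sub[OF that(1)] that(2,3) by auto
    ultimately show False using inj that(4) by (auto dest: inj_onD)
  qed
  have cover: "\<exists>u\<in>F. chi u = j" if "F \<in> Ed" "j < k" for F j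
    using Pset_col[OF feP[OF that(1)] that(2)] unfolding chi_def by blast
  have slmem: "(i, a) \<in> F \<Longrightarrow> a \<in> sl i F" for i a F by (simp add: sl_def)
  have Edv: "i < s \<and> a < ns i" if "F \<in> Ed" "(i, a) \<in> F" for F i a
    using Ed_sub[OF that(1)] that(2) by (auto simp: join_verts_iff)
  have kk_pos: "1 \<le> kk i" if "F \<in> Ed" "(i, a) \<in> F" for F i a
  proof -
    have i: "i < s" using Edv[OF that] by simp
    have "a \<in> sl i F" using that(2) by (simp add: sl_def)
    then have "sl i F \<noteq> {}" by auto
    then have "card (sl i F) \<noteq> 0" using sl_finite[OF Ed_sub[OF that(1)]] by simp
    then show ?thesis using Ed_sl[OF that(1) i] by linarith
  qed
  have kk_le1: "kk i \<le> 1" if i: "i < s" for i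
  proof (rule ccontr)
    assume "\<not> kk i \<le> 1"
    then have k2: "2 \<le> kk i" by simp
    obtain F0 where F0: "F0 \<in> Ed" using pe_any by blast
    have fin: "finite (sl i F0)" using sl_finite[OF Ed_sub[OF F0]] .
    have "\<exists>a<ns i. a \<notin> sl i F0"
    proof (rule ccontr)
      assume "\<not> ?thesis"
      then have "{0..<ns i} \<subseteq> sl i F0" by auto
      then have "card {0..<ns i} \<le> card (sl i F0)" by (rule card_mono[OF fin])
      then show False using Ed_sl[OF F0 i] ns_eq[OF i] k2 by simp
    qed
    then obtain a where a: "a < ns i" "a \<notin> sl i F0" by blast
    have "\<exists>F\<in>Ed. (i, a) \<in> F" using pe_single[OF i a(1)] k2 by simp
    then obtain Fv where Fv: "Fv \<in> Ed" "(i, a) \<in> Fv" by blast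
    have "chi (i, a) < k" by (rule chi_lt[OF Fv])
    then obtain u where u: "u \<in> F0" "chi u = chi (i, a)" using cover[OF F0] by blast
    obtain i' b where ub: "u = (i', b)" by (cases u)
    have uv: "(i', b) \<noteq> (i, a)" using u(1) a(2) ub by (auto simp: sl_def)
    have i'b: "i' < s" "b < ns i'" using Edv[OF F0] u(1) ub by auto
    show False
    proof (cases "i' = i")
      case True
      have "\<exists>F\<in>Ed. (i, b) \<in> F \<and> (i, a) \<in> F"
        using pe_same[OF i _ a(1) k2, of b] i'b True by simp
      then obtain F where F: "F \<in> Ed" "(i, b) \<in> F" "(i, a) \<in> F" by blast
      have "chi (i, b) \<noteq> chi (i, a)" by (rule diff[OF F]) (use uv True in simp)
      then show False using u(2) ub True by simp
    next
      case False
      have "1 \<le> kk i'" using kk_pos[OF F0] u(1) ub by blast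
      then have "\<exists>F\<in>Ed. (i', b) \<in> F \<and> (i, a) \<in> F"
        using pe_diff[OF i'b(1) i False i'b(2) a(1)] k2 by simp
      then obtain F where F: "F \<in> Ed" "(i', b) \<in> F" "(i, a) \<in> F" by blast
      have "chi (i', b) \<noteq> chi (i, a)" by (rule diff[OF F uv])
      then show False using u(2) ub by simp
    qed
  qed
  define NZ where "NZ = {i \<in> {..<s}. kk i = 1}"
  have NZ_fin: "finite NZ" unfolding NZ_def by simp
  have cNZ: "card NZ = k"
  proof -
    have kk01: "kk i = 0" if "i \<in> {..<s} - NZ" for i
    proof -
      have "i < s" "kk i \<noteq> 1" using that by (auto simp: NZ_def)
      then show ?thesis using kk_le1[of i] by linarith
    qed
    have "(\<Sum>i<s. kk i) = (\<Sum>i\<in>NZ. kk i)"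
      by (rule sum.mono_neutral_right) (use kk01 in \<open>auto simp: NZ_def\<close>)
    also have "\<dots> = (\<Sum>i\<in>NZ. 1)" by (rule sum.cong) (auto simp: NZ_def)
    also have "\<dots> = card NZ" by simp
    finally show ?thesis using sum_kk k_def by simp
  qed
  have NZ3: "i \<in> NZ \<Longrightarrow> ns i = 3" for i using ns_eq by (auto simp: NZ_def)
  have NZs: "i \<in> NZ \<Longrightarrow> i < s" for i by (simp add: NZ_def)
  have NZkk: "i \<in> NZ \<Longrightarrow> kk i = 1" for i by (simp add: NZ_def)
  have notNZ: "i < s \<Longrightarrow> i \<notin> NZ \<Longrightarrow> kk i = 0" for i using kk_le1 by (force simp: NZ_def)
  have chi_lt': "chi (i, a) < k" if i: "i \<in> NZ" and a: "a < 3" for i a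
  proof -
    have "\<exists>F\<in>Ed. (i, a) \<in> F" using pe_single[OF NZs[OF i]] NZ3[OF i] NZkk[OF i] a by simp
    then obtain F where "F \<in> Ed" "(i, a) \<in> F" by blast
    then show ?thesis by (rule chi_lt)
  qed
  have mono: "chi (i, a) = chi (i, b)" if i: "i \<in> NZ" and ab: "a < 3" "b < 3" for i a b
  proof (rule ccontr)
    assume ne: "chi (i, a) \<noteq> chi (i, b)"
    have "\<exists>F\<in>Ed. (i, a) \<in> F" using pe_single[OF NZs[OF i]] NZ3[OF i] NZkk[OF i] ab by simp
    then obtain F where F: "F \<in> Ed" "(i, a) \<in> F" by blast
    obtain u where u: "u \<in> F" "chi u = chi (i, b)" using cover[OF F(1) chi_lt'[OF i ab(2)]] by blast
    obtain i' b' where ub: "u = (i', b')" by (cases u)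
    show False
    proof (cases "i' = i")
      case True
      have fin: "finite (sl i F)" using sl_finite[OF Ed_sub[OF F(1)]] .
      have "card (sl i F) \<le> Suc 0" using Ed_sl[OF F(1) NZs[OF i]] NZkk[OF i] by simp
      moreover have "a \<in> sl i F" "b' \<in> sl i F" using F(2) u(1) ub True by (auto simp: sl_def)
      ultimately have "a = b'" using fin by (auto simp: card_le_Suc0_iff_eq)
      then show False using ne u(2) ub True by simp
    next
      case False
      have i'b: "i' < s" "b' < ns i'" using Edv[OF F(1)] u(1) ub by auto
      have "1 \<le> kk i'" using kk_pos[OF F(1)] u(1) ub by blast
      then have "\<exists>F\<in>Ed. (i', b') \<in> F \<and> (i, b) \<in> F"
        using pe_diff[OF i'b(1) NZs[OF i] False i'b(2)] NZ3[OF i] NZkk[OF i] ab by simp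
      then obtain F' where F': "F' \<in> Ed" "(i', b') \<in> F'" "(i, b) \<in> F'" by blast
      have "(i', b') \<noteq> (i, b)" using False by simp
      then have "chi (i', b') \<noteq> chi (i, b)" by (rule diff[OF F'])
      then show False using u(2) ub by simp
    qed
  qed
  define col where "col i = chi (i, 0)" for i
  have colNZ: "chi (i, a) = col i" if "i \<in> NZ" "a < 3" for i a
    unfolding col_def using mono[OF that(1) that(2)] by simp
  have col_inj: "inj_on col NZ"
  proof (rule inj_onI)
    fix i i' assume i: "i \<in> NZ" and i': "i' \<in> NZ" and eq: "col i = col i'"
    show "i = i'"
    proof (rule ccontr)
      assume ne: "i \<noteq> i'"
      have "\<exists>F\<in>Ed. (i, 0) \<in> F \<and> (i', 0) \<in> F"
        using pe_diff[OF NZs[OF i] NZs[OF i'] ne] NZ3[OF i] NZ3[OF i'] NZkk[OF i] NZkk[OF i'] by simp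
      then obtain F where F: "F \<in> Ed" "(i, 0) \<in> F" "(i', 0) \<in> F" by blast
      have "chi (i, 0) \<noteq> chi (i', 0)" using diff[OF F] ne by simp
      then show False using eq by (simp add: col_def)
    qed
  qed
  have col_onto: "col ` NZ = {..<k}"
  proof (rule card_subset_eq)
    show "finite {..<k}" by simp
    show "col ` NZ \<subseteq> {..<k}" using chi_lt' by (auto simp: col_def)
    show "card (col ` NZ) = card {..<k}" using card_image[OF col_inj] cNZ by simp
  qed
  define TT where "TT j = f ` {(i, a) | i a. i \<in> NZ \<and> a < 3 \<and> col i = j}" for j
  define T where "T = restrict TT {..<k}"
  have TTj: "TT j = f ` (Pair i ` {..<3::nat})" if "i \<in> NZ" "col i = j" for i j
  proof -
    have "{(i', a) | i' a. i' \<in> NZ \<and> a < 3 \<and> col i' = j} = Pair i ` {..<3::nat}"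
      using that col_inj by (auto simp: inj_on_def)
    then show ?thesis by (simp add: TT_def)
  qed
  have blk_sub: "Pair i ` {..<3::nat} \<subseteq> join_verts s ns" if "i \<in> NZ" for i
    using NZs[OF that] NZ3[OF that] by (auto simp: join_verts_iff)
  have TinC: "T \<in> Cfg k m"
    unfolding Cfg_def T_def
  proof (rule restrict_PiE_iff[THEN iffD2], intro ballI)
    fix j assume "j \<in> {..<k}"
    then have "j \<in> col ` NZ" using col_onto by simp
    then obtain i where i: "i \<in> NZ" "col i = j" by blast
    have c3: "card (TT j) = 3"
    proof -
      have "inj_on f (Pair i ` {..<3::nat})" using inj blk_sub[OF i(1)] by (rule inj_on_subset)
      then have "card (TT j) = card (Pair i ` {..<3::nat})" using TTj[OF i] by (simp add: card_image)
      also have "card (Pair i ` {..<3::nat}) = 3" by (simp add: card_image inj_on_def)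
      finally show ?thesis .
    qed
    have "TT j \<subseteq> {j*m..<j*m+m}"
    proof
      fix x assume "x \<in> TT j"
      then obtain a where a: "a < 3" "x = f (i, a)" using TTj[OF i] by auto
      have "f (i, a) div m = j" using colNZ[OF i(1) a(1)] i(2) by (simp add: chi_def)
      then show "x \<in> {j*m..<j*m+m}" using div_block m a(2) by blast
    qed
    then show "TT j \<in> {S. S \<subseteq> {j*m..<j*m+m} \<and> card S = 3}" using c3 by simp
  qed
  have "Tedges k m T \<subseteq> E"
  proof
    fix e assume e: "e \<in> Tedges k m T"
    then have eP: "e \<in> Pset k m" and eT: "e \<subseteq> (\<Union>j<k. T j)" by (auto simp: Tedges_def)
    have ex: "\<exists>i a. i \<in> NZ \<and> a < 3 \<and> x = f (i, a)" if xe: "x \<in> e" for x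
    proof -
      have "x \<in> (\<Union>j<k. T j)" using eT xe by blast
      then obtain j where j: "j < k" "x \<in> T j" by blast
      then have "x \<in> TT j" by (simp add: T_def)
      then show ?thesis by (auto simp: TT_def)
    qed
    define F where "F = {v \<in> join_verts s ns. fst v \<in> NZ \<and> f v \<in> e}"
    have Fs: "F \<subseteq> join_verts s ns" by (auto simp: F_def)
    have fF: "f ` F = e"
    proof
      show "f ` F \<subseteq> e" by (auto simp: F_def)
      show "e \<subseteq> f ` F"
      proof
        fix x assume x: "x \<in> e"
        then obtain i a where ia: "i \<in> NZ" "a < 3" "x = f (i, a)" using ex by blast
        have "(i, a) \<in> F" using ia x NZs[OF ia(1)] NZ3[OF ia(1)] by (auto simp: F_def join_verts_iff)
        then show "x \<in> f ` F" using ia by auto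
      qed
    qed
    have cardF: "card F = d + 1"
    proof -
      have "card F = card (f ` F)" using inj_on_subset[OF inj Fs] by (simp add: card_image)
      also have "\<dots> = k" using fF Pset_card[OF eP] by simp
      finally show ?thesis by (simp add: k_def)
    qed
    have slin: "sl i F \<in> Ks i" if i: "i < s" for i
    proof (rule small_in[OF i sl_sub[OF Fs]])
      show "card (sl i F) \<le> kk i"
      proof (cases "i \<in> NZ")
        case False
        then have "sl i F = {}" by (auto simp: sl_def F_def)
        then show ?thesis by simp
      next
        case True
        have fin: "finite (sl i F)" using sl_finite[OF Fs] .
        have "\<forall>a1\<in>sl i F. \<forall>a2\<in>sl i F. a1 = a2"
        proof (intro ballI)
          fix a1 a2 assume a1: "a1 \<in> sl i F" and a2: "a2 \<in> sl i F"
          have m1: "(i, a1) \<in> join_verts s ns" "f (i, a1) \<in> e" using a1 by (auto simp: sl_def F_def)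
          have m2: "(i, a2) \<in> join_verts s ns" "f (i, a2) \<in> e" using a2 by (auto simp: sl_def F_def)
          have "a1 < 3" "a2 < 3" using m1 m2 NZ3[OF True] by (auto simp: join_verts_iff)
          then have "chi (i, a1) = chi (i, a2)" using colNZ[OF True] by simp
          then have "f (i, a1) = f (i, a2)" using Pset_rainbow[OF eP m1(2) m2(2)] by (simp add: chi_def)
          then show "a1 = a2" using inj m1(1) m2(1) by (auto dest: inj_onD)
        qed
        then have "card (sl i F) \<le> Suc 0" using fin by (simp add: card_le_Suc0_iff_eq)
        then show ?thesis using NZkk[OF True] by simp
      qed
    qed
    have "F \<in> Ed" using Fs slin cardF by (simp add: Ed_def join_cx_iff)
    then have "f ` F \<in> E" by (rule fe)
    then show "e \<in> E" using fF by simp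
  qed
  then show False using cf TinC unfolding cfg_free_def k_def by blast
qed

end

lemma family_free_Pset:
  assumes d: "d \<ge> 1" and m: "0 < m" and E: "E \<subseteq> Pset (d+1) m" and cf: "cfg_free (d+1) m E"
  shows "family_free (V, E) (F_fam d)"
  unfolding family_free_def
proof (intro ballI notI)
  fix H assume H: "H \<in> F_fam d" and cc: "contains_copy (V, E) H"
  obtain s ns Ks where Hd: "H = skel d (join_verts s ns) (join_cx s ns Ks)" "s \<ge> 1"
    "\<forall>i<s. nice (ns i) (Ks i)" "cx_dim (join_cx s ns Ks) = d" "(\<Sum>i<s. ns i) = 2 * d + s + 2"
    using H unfolding F_fam_def by blast
  interpret J s ns Ks d using Hd d by unfold_locales auto
  obtain f where f: "inj_on f (join_verts s ns)"
    "\<forall>e\<in>{F \<in> join_cx s ns Ks. card F = d + 1}. f ` e \<in> E"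
    using cc unfolding contains_copy_def Hd(1) skel_def by auto
  show False
    by (rule no_copy[OF m E cf f(1)]) (use f(2) in \<open>auto simp: Ed_def\<close>)
qed



lemma ex_num_ge:
  assumes "is_kgraph k ({0..<n}, E)" "family_free ({0..<n}, E) F"
  shows "card E \<le> ex_num k n F"
proof -
  let ?S = "{card E | E. is_kgraph k ({0..<n}, E) \<and> family_free ({0..<n}, E) F}"
  have "?S \<subseteq> card ` Pow (Pow {0..<n})" by (auto simp: is_kgraph_def)
  then have "finite ?S" by (rule finite_subset) simp
  moreover have "card E \<in> ?S" using assms by blast
  ultimately show ?thesis unfolding ex_num_def by (rule Max_ge)
qed

lemma Pset_kgraph:
  assumes "E \<subseteq> Pset k m" "k * m \<le> n"
  shows "is_kgraph k ({0..<n}, E)"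
  unfolding is_kgraph_def
proof (intro conjI ballI)
  show "finite (fst ({0..<n}, E))" by simp
  fix e assume "e \<in> snd ({0..<n}, E)"
  then have e: "e \<in> Pset k m" using assms(1) by auto
  then have "e \<subseteq> {0..<k*m}" by (simp add: Pset_def)
  then show "e \<subseteq> fst ({0..<n}, E)" using assms(2) by auto
  show "card e = k" by (rule Pset_card[OF e])
qed

lemma div_lower:
  fixes n k :: nat
  assumes "4 * k \<le> n" "0 < k"
  shows "real n / (2 * real k) \<le> real (n div k)"
proof -
  have e: "k * (n div k) + n mod k = n" by simp
  have "n mod k < k" using assms by simp
  then have "n \<le> 2 * (k * (n div k))" using e assms(1) by linarith
  then have "real n \<le> 2 * real k * real (n div k)" by (metis of_nat_le_iff of_nat_mult of_nat_numeral mult.assoc)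
  then show ?thesis using assms(2) by (simp add: divide_le_eq mult.commute mult.left_commute)
qed

theorem corollary3p17:
  fixes d :: nat
  assumes "d \<ge> 1"
  shows "\<exists>C>0. \<exists>N::nat. \<forall>n\<ge>N.
    real (ex_num (d + 1) n (F_fam d)) \<ge>
      C * real n powr (real d + 1 - 2 * (real d + 1) / ((3::real) ^ (d + 1) - 1))"
proof -
  define k where "k = d + 1"
  define r where "r = (3::nat) ^ k"
  define al where "al = 2 * (real d + 1) / ((3::real) ^ (d + 1) - 1)"
  define be where "be = real d + 1 - al"
  have k2: "2 \<le> k" using assms by (simp add: k_def)
  have "(3::nat) ^ 2 \<le> 3 ^ k" using k2 by (intro power_increasing) auto
  then have r9: "9 \<le> r" by (simp add: r_def)
  have rr: "real r - 1 = (3::real) ^ (d + 1) - 1" by (simp add: r_def k_def)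
  have den: "8 \<le> (3::real) ^ (d + 1) - 1" using r9 rr by linarith
  have al_pos: "0 < al" unfolding al_def using den by simp
  have al_r: "al * (real r - 1) = 2 * real k" unfolding al_def rr k_def using den by simp
  have "al \<le> real d"
  proof -
    have "2 * (real d + 1) \<le> real d * 8" using assms by simp
    also have "\<dots> \<le> real d * ((3::real) ^ (d + 1) - 1)" using den by (intro mult_left_mono) auto
    finally show ?thesis unfolding al_def using den by (simp add: divide_le_eq)
  qed
  then have be1: "1 \<le> be" unfolding be_def by simp
  define C where "C = 1 / (8 * (2 * real k) powr be)"
  have Cpos: "0 < C" unfolding C_def using k2 by simp
  have "\<forall>n\<ge>4 * k. real (ex_num (d + 1) n (F_fam d)) \<ge> C * real n powr be"
  proof (intro allI impI)
    fix n assume n: "4 * k \<le> n"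
    define m where "m = n div k"
    have "4 * k div k \<le> n div k" by (rule div_le_mono[OF n])
    then have m4: "4 \<le> m" unfolding m_def using k2 by simp
    have mpos: "0 < m" using m4 by simp
    have rm: "real n / (2 * real k) \<le> real m" unfolding m_def by (rule div_lower[OF n]) (use k2 in simp)
    have km: "k * m \<le> n" unfolding m_def by simp
    define NP where "NP = card (Pset k m)"
    have NPge: "real m ^ k \<le> real NP" unfolding NP_def using card_Pset[of m k] by (metis of_nat_le_iff of_nat_power)
    have mk1: "1 \<le> real m ^ k" using m4 by simp
    have NPpos: "0 < real NP" using NPge mk1 by linarith
    define p where "p = real m powr (- al) / 2"
    have ppos: "0 < p" unfolding p_def using mpos by simp
    have p1: "p \<le> 1"
    proof -
      have "real m powr (- al) \<le> real m powr 0" using m4 al_pos by (intro powr_mono) auto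
      then show ?thesis unfolding p_def using mpos by simp
    qed
    define M where "M = nat \<lfloor>real NP * p\<rfloor>"
    have x0: "0 \<le> real NP * p" using NPpos ppos by simp
    then have fl0: "0 \<le> \<lfloor>real NP * p\<rfloor>" by simp
    have Meq: "real M = real_of_int \<lfloor>real NP * p\<rfloor>" unfolding M_def using fl0 by simp
    have M_le: "real M \<le> real NP * p" using Meq of_int_floor_le[of "real NP * p"] by linarith
    have M_ge: "real NP * p - 1 \<le> real M" using Meq real_of_int_floor_add_one_gt[of "real NP * p"] by linarith
    have MNP: "M \<le> NP"
    proof -
      have "real NP * p \<le> real NP * 1" using p1 NPpos by (intro mult_left_mono) auto
      then have "real M \<le> real NP" using M_le by linarith
      then show ?thesis by simp
    qed
    obtain E where E: "E \<subseteq> Pset k m" "cfg_free k m E"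
      "real M - real m ^ (3*k) * (real M / real NP) ^ r \<le> real (card E)"
      using good_E[OF MNP[unfolded NP_def]] unfolding NP_def[symmetric] r_def by blast
    define q where "q = real M / real NP"
    have q0: "0 \<le> q" unfolding q_def by simp
    have qp: "q \<le> p" unfolding q_def using M_le NPpos by (simp add: divide_le_eq mult.commute)
    have pow1: "q ^ r \<le> p ^ (r - 1) * q"
    proof -
      have "q ^ r = q ^ (r - 1) * q" using r9 by (metis Suc_diff_1 power_Suc2 not_numeral_le_zero gr0I)
      also have "\<dots> \<le> p ^ (r - 1) * q" using q0 qp by (intro mult_right_mono power_mono) auto
      finally show ?thesis .
    qed
    have pr: "p ^ (r - 1) = real m powr (- (2 * real k)) / 2 ^ (r - 1)"
    proof -
      have "(real m powr (- al)) ^ (r - 1) = real m powr (- al * real (r - 1))"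
        using mpos by (simp add: powr_realpow[symmetric] powr_powr)
      also have "- al * real (r - 1) = - (2 * real k)" using al_r r9 by (simp add: of_nat_diff)
      finally show ?thesis unfolding p_def by (simp add: power_divide)
    qed
    have mm: "real m ^ (3*k) * real m powr (- (2 * real k)) = real m ^ k"
    proof -
      have a: "real m ^ (3*k) = real m powr (real (3*k))" by (rule powr_realpow[symmetric]) (use mpos in simp)
      have b: "real m ^ k = real m powr (real k)" by (rule powr_realpow[symmetric]) (use mpos in simp)
      have c: "real (3*k) + - (2 * real k) = real k" by simp
      have "real m powr (real (3*k)) * real m powr (- (2 * real k)) = real m powr (real (3*k) + - (2 * real k))"
        by (rule powr_add[symmetric])
      then show ?thesis unfolding a b c .
    qed
    have two: "(2::real) \<le> 2 ^ (r - 1)"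
    proof -
      have "(2::real) ^ 1 \<le> 2 ^ (r - 1)" using r9 by (intro power_increasing) auto
      then show ?thesis by simp
    qed
    have key: "real m ^ (3*k) * p ^ (r - 1) \<le> real NP / 2"
    proof -
      have "real m ^ (3*k) * p ^ (r - 1) = real m ^ k / 2 ^ (r - 1)"
        unfolding pr using mm by (simp add: field_simps)
      also have "\<dots> \<le> real m ^ k / 2" using two mk1 by (intro divide_left_mono) auto
      also have "\<dots> \<le> real NP / 2" using NPge by simp
      finally show ?thesis .
    qed
    have bad_le: "real m ^ (3*k) * q ^ r \<le> real M / 2"
    proof -
      have "real m ^ (3*k) * q ^ r \<le> real m ^ (3*k) * (p ^ (r - 1) * q)"
        using pow1 by (intro mult_left_mono) auto
      also have "\<dots> = (real m ^ (3*k) * p ^ (r - 1)) * q" by simp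
      also have "\<dots> \<le> (real NP / 2) * q" using key q0 by (intro mult_right_mono) auto
      also have "\<dots> = real M / 2" unfolding q_def using NPpos by simp
      finally show ?thesis .
    qed
    have cE: "real M / 2 \<le> real (card E)" using E(3) bad_le unfolding q_def by linarith
    have mp: "real m ^ k * p = real m powr be / 2"
    proof -
      have a: "real m ^ k = real m powr (real k)" by (rule powr_realpow[symmetric]) (use mpos in simp)
      have b: "real k = real d + 1" by (simp add: k_def)
      have c: "real m powr (real d + 1) * real m powr (- al) = real m powr (real d + 1 + - al)"
        by (rule powr_add[symmetric])
      have "real m ^ k * p = (real m powr (real d + 1) * real m powr (- al)) / 2"
        unfolding a b p_def by simp
      then show ?thesis unfolding c be_def by simp
    qed
    have mbe4: "4 \<le> real m powr be"
    proof -
      have "real m powr 1 \<le> real m powr be" using be1 m4 by (intro powr_mono) auto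
      then show ?thesis using m4 mpos by simp
    qed
    have "real m powr be / 8 \<le> real (card E)"
    proof -
      have "real m ^ k * p \<le> real NP * p" using NPge ppos by (intro mult_right_mono) auto
      then show ?thesis using mp M_ge cE mbe4 by linarith
    qed
    moreover have "C * real n powr be \<le> real m powr be / 8"
    proof -
      have "(real n / (2 * real k)) powr be \<le> real m powr be"
        using rm be1 by (intro powr_mono2) auto
      then have "real n powr be / (2 * real k) powr be \<le> real m powr be"
        using k2 by (simp add: powr_divide)
      then show ?thesis unfolding C_def using k2 by (simp add: field_simps)
    qed
    moreover have "card E \<le> ex_num (d + 1) n (F_fam d)"
    proof (rule ex_num_ge)
      show "is_kgraph (d + 1) ({0..<n}, E)" using Pset_kgraph[OF E(1) km] by (simp add: k_def)
      show "family_free ({0..<n}, E) (F_fam d)"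
        using family_free_Pset[OF assms mpos] E unfolding k_def by blast
    qed
    ultimately show "real (ex_num (d + 1) n (F_fam d)) \<ge> C * real n powr be" by linarith
  qed
  then show ?thesis using Cpos unfolding be_def al_def by blast
qed


end
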